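(* For a finite group $G$, the following conditions are equivalent: (a) $P(G)$ is a threshold graph; (b) $P(G)$ is a split graph; (c) $P(G)$ contains no induced subgraph isomorphic to $2K_2$; (d) $G$ satisfies the intersection condition, i.e. $G$ does not contain subgroups $H$ and $K$ such that both $H\setminus K$ and $K\setminus H$ contain elements of order greater than $2$; (e) $G$ is one of: a cyclic group of prime power order (including the trivial group); an elementary abelian $2$-group; a dihedral $2$-group; a cyclic group of order $2p$; a dihedral group of order $2p^n$ ($n\ge1$); or a dihedral group of order $4p$; where $p$ is an odd prime.
   Context: The power graph $P(G)$ has vertex set $G$, with distinct $u,v$ adjacent if and only if $u=v^i$ or $v=u^j$ for some integers $i,j$. A threshold graph is a graph with no induced subgraph isomorphic to $P_4$ (path on four vertices), $C_4$ ($4$-cycle) or $2K_2$ (two disjoint edges with no other edges between them). A split graph is a graph whose vertex set is a disjoint union of a set inducing a complete graph and a set inducing a graph with no edges. The dihedral group of order $2m$ is $\langle a,b: a^m=b^2=(ab)^2=1\rangle$. *)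

theory Defs
  imports "HOL-Algebra.Algebra" "HOL-Algebra.Elementary_Groups" "HOL-Algebra.Multiplicative_Group"
begin

definition has_induced_P4 :: "'v set \<Rightarrow> ('v \<Rightarrow> 'v \<Rightarrow> bool) \<Rightarrow> bool" where
  "has_induced_P4 V E \<longleftrightarrow> (\<exists>a\<in>V. \<exists>b\<in>V. \<exists>c\<in>V. \<exists>d\<in>V. distinct [a,b,c,d] \<and>
      E a b \<and> E b c \<and> E c d \<and> \<not> E a c \<and> \<not> E a d \<and> \<not> E b d)"

definition has_induced_C4 :: "'v set \<Rightarrow> ('v \<Rightarrow> 'v \<Rightarrow> bool) \<Rightarrow> bool" where
  "has_induced_C4 V E \<longleftrightarrow> (\<exists>a\<in>V. \<exists>b\<in>V. \<exists>c\<in>V. \<exists>d\<in>V. distinct [a,b,c,d] \<and>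
      E a b \<and> E b c \<and> E c d \<and> E d a \<and> \<not> E a c \<and> \<not> E b d)"

definition has_induced_2K2 :: "'v set \<Rightarrow> ('v \<Rightarrow> 'v \<Rightarrow> bool) \<Rightarrow> bool" where
  "has_induced_2K2 V E \<longleftrightarrow> (\<exists>a\<in>V. \<exists>b\<in>V. \<exists>c\<in>V. \<exists>d\<in>V. distinct [a,b,c,d] \<and>
      E a b \<and> E c d \<and> \<not> E a c \<and> \<not> E a d \<and> \<not> E b c \<and> \<not> E b d)"

definition threshold_graph :: "'v set \<Rightarrow> ('v \<Rightarrow> 'v \<Rightarrow> bool) \<Rightarrow> bool" where
  "threshold_graph V E \<longleftrightarrow>
     \<not> has_induced_P4 V E \<and> \<not> has_induced_C4 V E \<and> \<not> has_induced_2K2 V E"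

definition split_graph :: "'v set \<Rightarrow> ('v \<Rightarrow> 'v \<Rightarrow> bool) \<Rightarrow> bool" where
  "split_graph V E \<longleftrightarrow> (\<exists>C I. C \<union> I = V \<and> C \<inter> I = {} \<and>
      (\<forall>x\<in>C. \<forall>y\<in>C. x \<noteq> y \<longrightarrow> E x y) \<and>
      (\<forall>x\<in>I. \<forall>y\<in>I. \<not> E x y))"

definition power_adj :: "('a, 'b) monoid_scheme \<Rightarrow> 'a \<Rightarrow> 'a \<Rightarrow> bool" where
  "power_adj G u v \<longleftrightarrow> u \<noteq> v \<and>
     ((\<exists>i::int. u = v [^]\<^bsub>G\<^esub> i) \<or> (\<exists>j::int. v = u [^]\<^bsub>G\<^esub> j))"

definition intersection_condition :: "('a, 'b) monoid_scheme \<Rightarrow> bool" where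
  "intersection_condition G \<longleftrightarrow> \<not> (\<exists>H K. subgroup H G \<and> subgroup K G \<and>
      (\<exists>x \<in> H - K. group.ord G x > 2) \<and> (\<exists>y \<in> K - H. group.ord G y > 2))"

text \<open>G is (isomorphic to) the dihedral group of order 2m =
  \<langle>a,b : a^m = b^2 = (ab)^2 = 1\<rangle>: G is generated by two elements satisfying these
  relations and has order 2m (the presented group has order 2m, so any such G is isomorphic
  to it and conversely).\<close>
definition is_dihedral :: "('a, 'b) monoid_scheme \<Rightarrow> nat \<Rightarrow> bool" where
  "is_dihedral G m \<longleftrightarrow> (\<exists>a\<in>carrier G. \<exists>b\<in>carrier G.
      generate G {a, b} = carrier G \<and>
      a [^]\<^bsub>G\<^esub> m = \<one>\<^bsub>G\<^esub> \<and> b [^]\<^bsub>G\<^esub> (2::nat) = \<one>\<^bsub>G\<^esub> \<and>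
      (a \<otimes>\<^bsub>G\<^esub> b) [^]\<^bsub>G\<^esub> (2::nat) = \<one>\<^bsub>G\<^esub>) \<and> order G = 2 * m"

definition elementary_abelian_2_group :: "('a, 'b) monoid_scheme \<Rightarrow> bool" where
  "elementary_abelian_2_group G \<longleftrightarrow> comm_group G \<and>
      (\<forall>x\<in>carrier G. x [^]\<^bsub>G\<^esub> (2::nat) = \<one>\<^bsub>G\<^esub>)"

definition in_threshold_family :: "('a, 'b) monoid_scheme \<Rightarrow> bool" where
  "in_threshold_family G \<longleftrightarrow>
     (cyclic_group G \<and> (\<exists>q n. Factorial_Ring.prime (q::nat) \<and> order G = q ^ n))
   \<or> elementary_abelian_2_group G
   \<or> (\<exists>k. is_dihedral G (2 ^ k))
   \<or> (\<exists>p. Factorial_Ring.prime (p::nat) \<and> odd p \<and>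
        ((cyclic_group G \<and> order G = 2 * p)
       \<or> (\<exists>n\<ge>1. is_dihedral G (p ^ n))
       \<or> is_dihedral G (2 * p)))"

end

theory Submission
  imports Defs
begin

definition pw :: "('a,'b) monoid_scheme \<Rightarrow> 'a \<Rightarrow> 'a \<Rightarrow> bool" where
  "pw G x y \<longleftrightarrow> (\<exists>i::int. y = x [^]\<^bsub>G\<^esub> i)"

definition CC :: "('a,'b) monoid_scheme \<Rightarrow> bool" where
  "CC G \<longleftrightarrow> (\<forall>x\<in>carrier G. \<forall>y\<in>carrier G. x [^]\<^bsub>G\<^esub> (2::nat) \<noteq> \<one>\<^bsub>G\<^esub> \<longrightarrow>
      y [^]\<^bsub>G\<^esub> (2::nat) \<noteq> \<one>\<^bsub>G\<^esub> \<longrightarrow> pw G x y \<or> pw G y x)"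

context group begin

lemma sq_eq: "x \<in> carrier G \<Longrightarrow> x [^] (2::nat) = x \<otimes> x"
  by (simp add: numeral_2_eq_2)

lemma power_adj_iff: "power_adj G u v \<longleftrightarrow> u \<noteq> v \<and> (pw G v u \<or> pw G u v)"
  unfolding power_adj_def pw_def by blast

lemma pw_gen: "x \<in> carrier G \<Longrightarrow> pw G x y \<longleftrightarrow> y \<in> generate G {x}"
  unfolding pw_def by (simp add: generate_pow)

lemma pw_refl: "x \<in> carrier G \<Longrightarrow> pw G x x"
  unfolding pw_def by (rule exI[of _ 1]) simp

lemma pw_one: "pw G x \<one>"
  unfolding pw_def by (rule exI[of _ 0]) simp

lemma pw_trans: "x \<in> carrier G \<Longrightarrow> pw G x y \<Longrightarrow> pw G y z \<Longrightarrow> pw G x z"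
proof -
  assume x: "x \<in> carrier G" and a: "pw G x y" and b: "pw G y z"
  obtain i :: int where i: "y = x [^] i" using a unfolding pw_def by blast
  obtain j :: int where j: "z = y [^] j" using b unfolding pw_def by blast
  have "z = x [^] (i * j)" using i j x by (simp add: int_pow_pow)
  then show ?thesis unfolding pw_def by blast
qed

lemma pw_inv: "x \<in> carrier G \<Longrightarrow> pw G x (inv x)"
  unfolding pw_def by (rule exI[of _ "-1"]) (simp add: int_pow_neg)

lemma pw_inv2: "x \<in> carrier G \<Longrightarrow> pw G (inv x) x"
  unfolding pw_def by (rule exI[of _ "-1"]) (simp add: int_pow_neg)

lemma pw_from_one: "pw G \<one> y \<Longrightarrow> y = \<one>"
  unfolding pw_def by auto

lemma pw_inv_left: "x \<in> carrier G \<Longrightarrow> pw G (inv x) y \<longleftrightarrow> pw G x y"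
  using pw_trans[of "inv x" x y] pw_trans[of x "inv x" y] pw_inv pw_inv2 by auto

lemma pw_inv_right: "x \<in> carrier G \<Longrightarrow> y \<in> carrier G \<Longrightarrow> pw G x (inv y) \<longleftrightarrow> pw G x y"
  using pw_trans[of x "inv y" y] pw_trans[of x y "inv y"] pw_inv[of y] pw_inv2[of y] by auto

lemma sq_ord: "x \<in> carrier G \<Longrightarrow> x [^] (2::nat) = \<one> \<longleftrightarrow> int (ord x) dvd 2"
proof -
  assume x: "x \<in> carrier G"
  have "int (ord x) dvd int 2 \<longleftrightarrow> ord x dvd 2" by (rule of_nat_dvd_iff)
  then show ?thesis using pow_eq_id[OF x, of 2] by simp
qed

lemma pw_sq1: assumes x: "x \<in> carrier G" and sq: "x [^] (2::nat) = \<one>" and p: "pw G x y"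
  shows "y = \<one> \<or> y = x"
proof -
  obtain i :: int where y: "y = x [^] i" using p unfolding pw_def by blast
  have o: "int (ord x) dvd 2" using sq_ord[OF x] sq by simp
  show ?thesis
  proof (cases "even i")
    case True
    have "int (ord x) dvd (0 - i)" by (rule dvd_trans[OF o]) (use True in simp)
    then have "x [^] i = x [^] (0::int)" using int_pow_eq[OF x] by blast
    then show ?thesis using y by simp
  next
    case False
    have "int (ord x) dvd (1 - i)" by (rule dvd_trans[OF o]) (use False in simp)
    then have "x [^] i = x [^] (1::int)" using int_pow_eq[OF x] by blast
    then show ?thesis using y x by simp
  qed
qed

lemma ord_gt2: "finite (carrier G) \<Longrightarrow> x \<in> carrier G \<Longrightarrow> ord x > 2 \<longleftrightarrow> x [^] (2::nat) \<noteq> \<one>"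
proof -
  assume f: "finite (carrier G)" and x: "x \<in> carrier G"
  have "ord x \<ge> 1" using ord_ge_1[OF f x] .
  moreover have "x [^] (2::nat) = \<one> \<longleftrightarrow> ord x dvd 2" using pow_eq_id[OF x] .
  moreover have "ord x dvd 2 \<longleftrightarrow> ord x \<le> 2" if "ord x \<ge> 1"
    using that by (auto dest: dvd_imp_le) (metis One_nat_def dvd_1_left dvd_refl le_Suc_eq le_antisym numeral_2_eq_2)
  ultimately show ?thesis by auto
qed

lemma pw_ord_dvd: "x \<in> carrier G \<Longrightarrow> pw G x y \<Longrightarrow> ord y dvd ord x"
proof -
  assume x: "x \<in> carrier G" and p: "pw G x y"
  obtain i :: int where y: "y = x [^] i" using p unfolding pw_def by blast
  have "y [^] (int (ord x)) = x [^] (i * int (ord x))" using y x by (simp add: int_pow_pow)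
  also have "\<dots> = \<one>" using x by (simp add: int_pow_eq_id)
  finally have "int (ord y) dvd int (ord x)" using int_pow_eq_id[of y "int (ord x)"] x y by simp
  then show ?thesis by simp
qed

end


lemma split_no_2K2: "split_graph V E \<Longrightarrow> \<not> has_induced_2K2 V E"
proof
  assume "split_graph V E" "has_induced_2K2 V E"
  then obtain C I where CI: "C \<union> I = V" and cl: "\<forall>x\<in>C. \<forall>y\<in>C. x \<noteq> y \<longrightarrow> E x y"
    and ind: "\<forall>x\<in>I. \<forall>y\<in>I. \<not> E x y" unfolding split_graph_def by blast
  obtain a b c d where v: "a \<in> V" "b \<in> V" "c \<in> V" "d \<in> V" and dist: "distinct [a,b,c,d]"
    and e: "E a b" "E c d" and ne: "\<not> E a c" "\<not> E a d" "\<not> E b c" "\<not> E b d"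
    using \<open>has_induced_2K2 V E\<close> unfolding has_induced_2K2_def by blast
  have ab: "a \<in> C \<or> b \<in> C" using CI v ind e by blast
  have cd: "c \<in> C \<or> d \<in> C" using CI v ind e by blast
  have d: "a \<noteq> c" "a \<noteq> d" "b \<noteq> c" "b \<noteq> d" using dist by auto
  from ab cd show False using cl ne d by blast
qed

lemma split_no_C4: "split_graph V E \<Longrightarrow> \<not> has_induced_C4 V E"
proof
  assume "split_graph V E" "has_induced_C4 V E"
  then obtain C I where CI: "C \<union> I = V" and cl: "\<forall>x\<in>C. \<forall>y\<in>C. x \<noteq> y \<longrightarrow> E x y"
    and ind: "\<forall>x\<in>I. \<forall>y\<in>I. \<not> E x y" unfolding split_graph_def by blast
  obtain a b c d where v: "a \<in> V" "b \<in> V" "c \<in> V" "d \<in> V" and dist: "distinct [a,b,c,d]"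
    and e: "E a b" "E b c" "E c d" "E d a" and ne: "\<not> E a c" "\<not> E b d"
    using \<open>has_induced_C4 V E\<close> unfolding has_induced_C4_def by blast
  have d: "a \<noteq> c" "b \<noteq> d" using dist by auto
  have ac: "a \<in> I \<or> c \<in> I" using CI v cl ne d by blast
  have bd: "b \<in> I \<or> d \<in> I" using CI v cl ne d by blast
  from ac bd show False using ind e by blast
qed

context group begin

lemma adj_sym: "power_adj G u v \<longleftrightarrow> power_adj G v u"
  unfolding power_adj_iff by blast

lemma CC_split:
  assumes cc: "CC G"
  shows "split_graph (carrier G) (power_adj G)"
proof -
  define C where "C = {x\<in>carrier G. x [^] (2::nat) \<noteq> \<one>} \<union> {\<one>}"
  define I where "I = {x\<in>carrier G. x [^] (2::nat) = \<one> \<and> x \<noteq> \<one>}"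
  have 1: "C \<union> I = carrier G" unfolding C_def I_def by auto
  have 2: "C \<inter> I = {}" unfolding C_def I_def by auto
  have 3: "\<forall>x\<in>C. \<forall>y\<in>C. x \<noteq> y \<longrightarrow> power_adj G x y"
  proof (intro ballI impI)
    fix x y assume x: "x \<in> C" and y: "y \<in> C" and ne: "x \<noteq> y"
    show "power_adj G x y"
    proof (cases "x = \<one> \<or> y = \<one>")
      case True then show ?thesis using ne pw_one unfolding power_adj_iff by blast
    next
      case False
      then have "x \<in> carrier G" "y \<in> carrier G" "x [^] (2::nat) \<noteq> \<one>" "y [^] (2::nat) \<noteq> \<one>"
        using x y unfolding C_def by auto
      then have "pw G x y \<or> pw G y x" using cc unfolding CC_def by blast
      then show ?thesis using ne unfolding power_adj_iff by blast
    qed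
  qed
  have 4: "\<forall>x\<in>I. \<forall>y\<in>I. \<not> power_adj G x y"
  proof (intro ballI notI)
    fix x y assume x: "x \<in> I" and y: "y \<in> I" and a: "power_adj G x y"
    have xc: "x \<in> carrier G" "x [^] (2::nat) = \<one>" "x \<noteq> \<one>" using x unfolding I_def by auto
    have yc: "y \<in> carrier G" "y [^] (2::nat) = \<one>" "y \<noteq> \<one>" using y unfolding I_def by auto
    from a have "x \<noteq> y" "pw G y x \<or> pw G x y" unfolding power_adj_iff by auto
    then show False using pw_sq1[OF xc(1) xc(2), of y] pw_sq1[OF yc(1) yc(2), of x] xc yc by auto
  qed
  show ?thesis unfolding split_graph_def using 1 2 3 4 by blast
qed

lemma P4_key:
  assumes cc: "CC G" and xc: "x \<in> carrier G" and yc: "y \<in> carrier G" and wc: "w \<in> carrier G"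
    and y1: "y \<noteq> \<one>" and e: "power_adj G x y" and p: "pw G w y" and xw: "x \<noteq> w"
  shows "power_adj G x w"
proof (cases "y = w")
  case True then show ?thesis using e by simp
next
  case yw: False
  from e have xy: "x \<noteq> y" and "pw G y x \<or> pw G x y" unfolding power_adj_iff by auto
  then consider "pw G y x" | "pw G x y" by blast
  then show ?thesis
  proof cases
    case 1
    then have "pw G w x" using pw_trans[OF wc p] by blast
    then show ?thesis using xw unfolding power_adj_iff by blast
  next
    case 2
    have w2: "w [^] (2::nat) \<noteq> \<one>"
    proof
      assume "w [^] (2::nat) = \<one>"
      then have "y = \<one> \<or> y = w" using pw_sq1[OF wc _ p] by blast
      then show False using y1 yw by blast
    qed
    have x2: "x [^] (2::nat) \<noteq> \<one>"
    proof
      assume "x [^] (2::nat) = \<one>"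
      then have "y = \<one> \<or> y = x" using pw_sq1[OF xc _ 2] by blast
      then show False using y1 xy by blast
    qed
    have "pw G x w \<or> pw G w x" using cc xc wc x2 w2 unfolding CC_def by blast
    then show ?thesis using xw unfolding power_adj_iff by blast
  qed
qed

lemma CC_noP4:
  assumes cc: "CC G"
  shows "\<not> has_induced_P4 (carrier G) (power_adj G)"
proof
  assume "has_induced_P4 (carrier G) (power_adj G)"
  then obtain a b c d where abcd: "a \<in> carrier G" "b \<in> carrier G" "c \<in> carrier G" "d \<in> carrier G"
    and dist: "distinct [a,b,c,d]"
    and e: "power_adj G a b" "power_adj G b c" "power_adj G c d"
    and ne: "\<not> power_adj G a c" "\<not> power_adj G a d" "\<not> power_adj G b d"
    unfolding has_induced_P4_def by blast
  have one_adj: "\<And>u. u \<in> carrier G \<Longrightarrow> u \<noteq> \<one> \<Longrightarrow> power_adj G u \<one>"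
    using pw_one unfolding power_adj_iff by blast
  have dd: "b \<noteq> d" "a \<noteq> c" using dist by auto
  have b1: "b \<noteq> \<one>"
  proof
    assume "b = \<one>"
    then have "power_adj G d b" using one_adj[of d] abcd dd by auto
    then show False using ne(3) adj_sym by blast
  qed
  have c1: "c \<noteq> \<one>"
  proof
    assume "c = \<one>"
    then have "power_adj G a c" using one_adj[of a] abcd dd by auto
    then show False using ne(1) by blast
  qed
  from e(2) have "pw G c b \<or> pw G b c" unfolding power_adj_iff by auto
  then show False
  proof
    assume p: "pw G c b"
    have "power_adj G a c" using P4_key[OF cc abcd(1) abcd(2) abcd(3) b1 e(1) p] dist by auto
    then show False using ne(1) by blast
  next
    assume p: "pw G b c"
    have "power_adj G d c" using e(3) adj_sym by blast
    then have "power_adj G d b" using P4_key[OF cc abcd(4) abcd(3) abcd(2) c1 _ p] dist by auto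
    then show False using ne(3) adj_sym by blast
  qed
qed

lemma notCC_2K2:
  assumes n: "\<not> CC G"
  shows "has_induced_2K2 (carrier G) (power_adj G)"
proof -
  obtain x y where x: "x \<in> carrier G" and y: "y \<in> carrier G"
    and x2: "x [^] (2::nat) \<noteq> \<one>" and y2: "y [^] (2::nat) \<noteq> \<one>"
    and nxy: "\<not> pw G x y" and nyx: "\<not> pw G y x"
    using n unfolding CC_def by blast
  have xi: "x \<noteq> inv x"
  proof
    assume h: "x = inv x"
    have "x \<otimes> x = x \<otimes> inv x" using arg_cong[OF h, of "\<lambda>t. x \<otimes> t"] .
    then have "x \<otimes> x = \<one>" using x by simp
    then show False using x2 sq_eq[OF x] by simp
  qed
  have yi: "y \<noteq> inv y"
  proof
    assume h: "y = inv y"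
    have "y \<otimes> y = y \<otimes> inv y" using arg_cong[OF h, of "\<lambda>t. y \<otimes> t"] .
    then have "y \<otimes> y = \<one>" using y by simp
    then show False using y2 sq_eq[OF y] by simp
  qed
  have pl: "\<And>u. pw G (inv x) u \<longleftrightarrow> pw G x u" "\<And>u. pw G (inv y) u \<longleftrightarrow> pw G y u"
    using pw_inv_left x y by auto
  have pr: "\<And>u. u \<in> carrier G \<Longrightarrow> pw G u (inv x) \<longleftrightarrow> pw G u x"
    "\<And>u. u \<in> carrier G \<Longrightarrow> pw G u (inv y) \<longleftrightarrow> pw G u y"
    using pw_inv_right x y by auto
  have pxy: "pw G u v \<longleftrightarrow> pw G x y" if "u \<in> {x, inv x}" "v \<in> {y, inv y}" for u v
  proof -
    have "pw G u v \<longleftrightarrow> pw G x v" using that(1) pl(1) by blast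
    also have "\<dots> \<longleftrightarrow> pw G x y" using that(2) pr(2)[OF x] by blast
    finally show ?thesis .
  qed
  have pyx: "pw G v u \<longleftrightarrow> pw G y x" if "u \<in> {x, inv x}" "v \<in> {y, inv y}" for u v
  proof -
    have "pw G v u \<longleftrightarrow> pw G y u" using that(2) pl(2) by blast
    also have "\<dots> \<longleftrightarrow> pw G y x" using that(1) pr(1)[OF y] by blast
    finally show ?thesis .
  qed
  have nadj: "\<not> power_adj G u v" if "u \<in> {x, inv x}" "v \<in> {y, inv y}" for u v
    using pxy[OF that] pyx[OF that] nxy nyx unfolding power_adj_iff by blast
  have neq: "u \<noteq> v" if "u \<in> {x, inv x}" "v \<in> {y, inv y}" for u v
  proof
    assume "u = v"
    moreover have "u \<in> carrier G" using that x by auto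
    ultimately have "pw G u v" using pw_refl by simp
    then show False using pxy[OF that] nxy by blast
  qed
  have dist: "distinct [x, inv x, y, inv y]" using xi yi neq[of x y] neq[of x "inv y"] neq[of "inv x" y] neq[of "inv x" "inv y"] by simp
  have e1: "power_adj G x (inv x)" using xi pw_inv[OF x] unfolding power_adj_iff by blast
  have e2: "power_adj G y (inv y)" using yi pw_inv[OF y] unfolding power_adj_iff by blast
  have n: "\<not> power_adj G x y" "\<not> power_adj G x (inv y)" "\<not> power_adj G (inv x) y"
    "\<not> power_adj G (inv x) (inv y)" using nadj by auto
  show ?thesis unfolding has_induced_2K2_def
    apply (rule bexI[of _ x], rule bexI[of _ "inv x"], rule bexI[of _ y], rule bexI[of _ "inv y"])
    using dist e1 e2 n x y by simp_all
qed

lemma CC_IC: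
  assumes fin: "finite (carrier G)"
  shows "CC G \<longleftrightarrow> intersection_condition G"
proof
  assume cc: "CC G"
  show "intersection_condition G"
    unfolding intersection_condition_def
  proof clarify
    fix H K x y assume H: "subgroup H G" and K: "subgroup K G"
      and x: "x \<in> H" "x \<notin> K" "ord x > 2" and y: "y \<in> K" "y \<notin> H" "ord y > 2"
    have xc: "x \<in> carrier G" using H x subgroup.subset by blast
    have yc: "y \<in> carrier G" using K y subgroup.subset by blast
    have "pw G x y \<or> pw G y x" using cc xc yc x(3) y(3) ord_gt2[OF fin] unfolding CC_def by blast
    then show False
      using x y subgroup_int_pow_closed[OF H x(1)] subgroup_int_pow_closed[OF K y(1)]
      unfolding pw_def by blast
  qed
next
  assume ic: "intersection_condition G"
  show "CC G"
  proof (rule ccontr)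
    assume "\<not> CC G"
    then obtain x y where x: "x \<in> carrier G" and y: "y \<in> carrier G"
      and x2: "x [^] (2::nat) \<noteq> \<one>" and y2: "y [^] (2::nat) \<noteq> \<one>"
      and nxy: "\<not> pw G x y" and nyx: "\<not> pw G y x"
      unfolding CC_def by blast
    have "x \<in> generate G {x} - generate G {y}" using generate.incl[of x "{x}"] nyx pw_gen[OF y] by auto
    moreover have "y \<in> generate G {y} - generate G {x}" using generate.incl[of y "{y}"] nxy pw_gen[OF x] by auto
    moreover have "subgroup (generate G {x}) G" "subgroup (generate G {y}) G"
      using x y by (auto intro: generate_is_subgroup)
    moreover have "ord x > 2" "ord y > 2" using x y x2 y2 ord_gt2[OF fin] by auto
    ultimately have "\<exists>H K. subgroup H G \<and> subgroup K G \<and>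
      (\<exists>x \<in> H - K. ord x > 2) \<and> (\<exists>y \<in> K - H. ord y > 2)" by blast
    then show False using ic unfolding intersection_condition_def by blast
  qed
qed

end


lemma primepow_comp:
  fixes q :: nat assumes q: "Factorial_Ring.prime q" and d1: "d1 dvd q ^ n" and d2: "d2 dvd q ^ n"
  shows "d1 dvd d2 \<or> d2 dvd d1"
proof -
  obtain i where i: "d1 = q ^ i" using d1 divides_primepow_nat[OF q] by blast
  obtain j where j: "d2 = q ^ j" using d2 divides_primepow_nat[OF q] by blast
  show ?thesis
  proof (cases "i \<le> j")
    case True then show ?thesis using i j le_imp_power_dvd by blast
  next
    case False then show ?thesis using i j le_imp_power_dvd by (metis nat_le_linear)
  qed
qed

lemma twop_div:
  fixes p d :: nat assumes p: "Factorial_Ring.prime p" and d: "d dvd 2 * p" and d2: "d > 2"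
  shows "d = p \<or> d = 2 * p"
proof (cases "p dvd d")
  case True
  then obtain e where e: "d = p * e" by blast
  have "p * e dvd p * 2" using d e by (simp add: mult.commute)
  then have "e dvd 2" using p by (simp add: prime_gt_0_nat)
  then have "e \<le> 2" "e > 0" using dvd_imp_le by (auto intro!: gr0I)
  then have "e = 1 \<or> e = 2" by auto
  then show ?thesis using e by auto
next
  case False
  then have "coprime p d" using p by (intro prime_imp_coprime)
  then have "coprime d p" by (simp add: coprime_commute)
  then have "d dvd 2" using d by (metis coprime_dvd_mult_left_iff)
  then have "d \<le> 2" using dvd_imp_le by auto
  then show ?thesis using d2 by simp
qed

lemma twop_comp:
  fixes p :: nat assumes p: "Factorial_Ring.prime p" and d1: "d1 dvd 2 * p" "d1 > 2" and d2: "d2 dvd 2 * p" "d2 > 2"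
  shows "d1 dvd d2 \<or> d2 dvd d1"
  using twop_div[OF p d1] twop_div[OF p d2] by auto

context group begin

lemma KC:
  assumes fin: "finite (carrier G)" and g: "g \<in> carrier G"
    and x: "x \<in> generate G {g}" and y: "y \<in> generate G {g}" and dv: "ord x dvd ord y"
  shows "pw G y x"
proof -
  have gen_sub: "generate G {g} \<subseteq> carrier G" using g generate_incl by blast
  have xc: "x \<in> carrier G" and yc: "y \<in> carrier G" using x y gen_sub by auto
  define n where "n = ord g"
  define e where "e = ord y"
  have n1: "n \<ge> 1" unfolding n_def using ord_ge_1[OF fin g] .
  have e1: "e \<ge> 1" unfolding e_def using ord_ge_1[OF fin yc] .
  obtain j :: nat where j: "y = g [^] j" using y generate_pow_on_finite_carrier[OF fin g] by blast
  have "y [^] n = (g [^] n) [^] j" using j g by (simp add: nat_pow_pow mult.commute)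
  also have "\<dots> = \<one>" unfolding n_def using g by simp
  finally have "e dvd n" unfolding e_def using pow_eq_id[OF yc] by blast
  then obtain k where k: "n = e * k" by blast
  have k0: "k \<noteq> 0" using k n1 by auto
  define h where "h = g [^] k"
  have hc: "h \<in> carrier G" unfolding h_def using g by simp
  have oh: "ord h = e" unfolding h_def using ord_pow[OF g, of k] k k0 e1 unfolding n_def by simp
  have sub1: "generate G {y} \<subseteq> generate G {h}"
  proof
    fix u assume "u \<in> generate G {y}"
    then obtain t :: nat where t: "u = y [^] t" using generate_pow_on_finite_carrier[OF fin yc] by blast
    have "u = g [^] (j * t)" using t j g by (simp add: nat_pow_pow)
    moreover have "u [^] e = (y [^] e) [^] t" using t yc by (simp add: nat_pow_pow mult.commute)
    then have "u [^] e = \<one>" using yc unfolding e_def by simp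
    ultimately have "g [^] (j * t * e) = \<one>" using g by (simp add: nat_pow_pow)
    then have "n dvd j * t * e" unfolding n_def using pow_eq_id[OF g] by blast
    then have "e * k dvd e * (j * t)" using k by (simp add: mult.commute mult.left_commute)
    then have "k dvd j * t" using e1 by simp
    then obtain r where r: "j * t = k * r" by blast
    have "u = h [^] r" unfolding h_def using \<open>u = g [^] (j * t)\<close> r g by (simp add: nat_pow_pow)
    then show "u \<in> generate G {h}" using generate_pow_on_finite_carrier[OF fin hc] by blast
  qed
  have fin_h: "finite (generate G {h})" using fin generate_incl[of "{h}"] hc finite_subset by blast
  have "card (generate G {y}) = card (generate G {h})"
    using generate_pow_card[OF yc] generate_pow_card[OF hc] oh unfolding e_def by simp
  then have eq: "generate G {y} = generate G {h}" using card_subset_eq[OF fin_h sub1] by simp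
  have "x [^] e = \<one>" using dv pow_eq_id[OF xc] unfolding e_def by blast
  obtain i :: nat where i: "x = g [^] i" using x generate_pow_on_finite_carrier[OF fin g] by blast
  have "g [^] (i * e) = \<one>" using \<open>x [^] e = \<one>\<close> i g by (simp add: nat_pow_pow)
  then have "e * k dvd e * i" using pow_eq_id[OF g] k unfolding n_def by (simp add: mult.commute)
  then have "k dvd i" using e1 by simp
  then obtain r where r: "i = k * r" by blast
  have "x = h [^] r" unfolding h_def using i r g by (simp add: nat_pow_pow)
  then have "x \<in> generate G {h}" using generate_pow_on_finite_carrier[OF fin hc] by blast
  then have "x \<in> generate G {y}" using eq by simp
  then show ?thesis using pw_gen[OF yc] by simp
qed

lemma FamCC:
  assumes fin: "finite (carrier G)" and g: "g \<in> carrier G" and dvM: "ord g dvd M"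
    and inA: "\<forall>x\<in>carrier G. x [^] (2::nat) \<noteq> \<one> \<longrightarrow> x \<in> generate G {g}"
    and comp: "\<forall>d1 d2. d1 dvd M \<longrightarrow> d2 dvd M \<longrightarrow> d1 > 2 \<longrightarrow> d2 > 2 \<longrightarrow> d1 dvd d2 \<or> d2 dvd d1"
  shows "CC G"
  unfolding CC_def
proof (intro ballI impI)
  fix x y assume xc: "x \<in> carrier G" and yc: "y \<in> carrier G"
    and x2: "x [^] (2::nat) \<noteq> \<one>" and y2: "y [^] (2::nat) \<noteq> \<one>"
  have xA: "x \<in> generate G {g}" and yA: "y \<in> generate G {g}" using inA xc yc x2 y2 by auto
  have "ord x dvd ord g" using pw_ord_dvd[OF g] pw_gen[OF g] xA by blast
  then have xM: "ord x dvd M" using dvM by (rule dvd_trans)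
  have "ord y dvd ord g" using pw_ord_dvd[OF g] pw_gen[OF g] yA by blast
  then have yM: "ord y dvd M" using dvM by (rule dvd_trans)
  have "ord x > 2" "ord y > 2" using ord_gt2[OF fin] xc yc x2 y2 by auto
  then have "ord x dvd ord y \<or> ord y dvd ord x" using comp xM yM by blast
  then show "pw G x y \<or> pw G y x" using KC[OF fin g xA yA] KC[OF fin g yA xA] by blast
qed

lemma cyclic_gen:
  assumes fin: "finite (carrier G)" and c: "cyclic_group G"
  shows "\<exists>g\<in>carrier G. carrier G = generate G {g} \<and> ord g = order G"
proof -
  obtain g where g: "g \<in> carrier G" and eq: "carrier G = range (\<lambda>n::int. g [^] n)"
    using c cyclic_group by blast
  have "carrier G = generate G {g}" using eq generate_pow[OF g] by auto
  moreover have "ord g = order G" using generate_pow_card[OF g] calculation unfolding order_def by simp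
  ultimately show ?thesis using g by blast
qed

lemma dihedral_struct:
  assumes d: "is_dihedral G m"
  shows "\<exists>a\<in>carrier G. a [^] m = \<one> \<and> (\<forall>x\<in>carrier G. x \<in> generate G {a} \<or> x [^] (2::nat) = \<one>)"
proof -
  obtain a b where a: "a \<in> carrier G" and b: "b \<in> carrier G" and gen: "generate G {a, b} = carrier G"
    and am: "a [^] m = \<one>" and b2: "b [^] (2::nat) = \<one>" and ab2: "(a \<otimes> b) [^] (2::nat) = \<one>"
    using d unfolding is_dihedral_def by blast
  define A where "A = generate G {a}"
  have Ac: "A \<subseteq> carrier G" unfolding A_def using a generate_incl by blast
  have comm: "c1 \<otimes> c2 = c2 \<otimes> c1" if "c1 \<in> A" "c2 \<in> A" for c1 c2
  proof -
    have "c1 \<in> {a [^] (k::int) | k. k \<in> UNIV}" using that(1) generate_pow[OF a] A_def by simp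
    then obtain i :: int where i: "c1 = a [^] i" by blast
    have "c2 \<in> {a [^] (k::int) | k. k \<in> UNIV}" using that(2) generate_pow[OF a] A_def by simp
    then obtain j :: int where j: "c2 = a [^] j" by blast
    have "c1 \<otimes> c2 = a [^] (i + j)" using i j int_pow_mult[OF a] by simp
    also have "\<dots> = a [^] (j + i)" by (simp add: add.commute)
    also have "\<dots> = c2 \<otimes> c1" using i j int_pow_mult[OF a] by simp
    finally show ?thesis .
  qed
  have Asub: "subgroup A G" unfolding A_def using a by (auto intro: generate_is_subgroup)
  have bb: "b \<otimes> b = \<one>" using b2 sq_eq[OF b] by simp
  have binv: "inv b = b" using inv_equality[OF bb b b] .
  have abab: "a \<otimes> (b \<otimes> a \<otimes> b) = \<one>" using ab2 sq_eq[of "a \<otimes> b"] a b by (simp add: m_assoc)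
  have bab: "b \<otimes> a \<otimes> b = inv a"
    using inv_solve_left[of "b \<otimes> a \<otimes> b" a "\<one>"] abab a b by simp
  have conj: "b \<otimes> c \<otimes> b = inv c" if "c \<in> A" for c
    using that unfolding A_def
  proof (induction rule: generate.induct)
    case one then show ?case using bb b by simp
  next
    case (incl h) then show ?case using bab by simp
  next
    case (inv h)
    then have h: "h = a" by simp
    have "b \<otimes> inv a \<otimes> b = inv (b \<otimes> a \<otimes> b)" using a b binv by (simp add: inv_mult_group m_assoc)
    then show ?case using h bab a by simp
  next
    case (eng h1 h2)
    have h1c: "h1 \<in> carrier G" and h2c: "h2 \<in> carrier G" using eng.hyps Ac unfolding A_def by auto
    have hA: "h1 \<in> A" "h2 \<in> A" using eng.hyps unfolding A_def by auto
    have "(b \<otimes> h1 \<otimes> b) \<otimes> (b \<otimes> h2 \<otimes> b) = b \<otimes> (h1 \<otimes> ((b \<otimes> b) \<otimes> (h2 \<otimes> b)))"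
      using h1c h2c b by (simp add: m_assoc)
    also have "\<dots> = b \<otimes> (h1 \<otimes> h2) \<otimes> b" using bb h1c h2c b by (simp add: m_assoc)
    finally have "b \<otimes> (h1 \<otimes> h2) \<otimes> b = (b \<otimes> h1 \<otimes> b) \<otimes> (b \<otimes> h2 \<otimes> b)" by simp
    also have "\<dots> = inv h1 \<otimes> inv h2" using eng.IH by simp
    also have "\<dots> = inv h2 \<otimes> inv h1"
      using comm[of "inv h1" "inv h2"] subgroup.m_inv_closed[OF Asub] hA by blast
    also have "\<dots> = inv (h1 \<otimes> h2)" using h1c h2c by (simp add: inv_mult_group)
    finally show ?case .
  qed
  have struct: "x \<in> A \<or> (\<exists>c\<in>A. x = c \<otimes> b)" if "x \<in> generate G {a, b}" for x
    using that
  proof (induction rule: generate.induct)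
    case one then show ?case using subgroup.one_closed[OF Asub] by simp
  next
    case (incl h)
    then show ?case using generate.incl[of a "{a}"] subgroup.one_closed[OF Asub] b unfolding A_def by force
  next
    case (inv h)
    then show ?case using generate.inv[of a "{a}"] subgroup.one_closed[OF Asub] b binv unfolding A_def by force
  next
    case (eng h1 h2)
    from eng.IH(1) eng.IH(2) show ?case
    proof (elim disjE bexE)
      assume "h1 \<in> A" "h2 \<in> A" then show ?case using subgroup.m_closed[OF Asub] by blast
    next
      fix c assume h1: "h1 \<in> A" and c: "c \<in> A" "h2 = c \<otimes> b"
      have "h1 \<otimes> h2 = (h1 \<otimes> c) \<otimes> b" using c h1 Ac b by (simp add: m_assoc subsetD)
      then show ?case using subgroup.m_closed[OF Asub h1 c(1)] by blast
    next
      fix c assume c: "c \<in> A" "h1 = c \<otimes> b" and h2: "h2 \<in> A"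
      have cc: "c \<in> carrier G" "h2 \<in> carrier G" using c h2 Ac by auto
      have "c \<otimes> (b \<otimes> h2 \<otimes> b) \<otimes> b = c \<otimes> (b \<otimes> (h2 \<otimes> (b \<otimes> b)))"
        using cc b by (simp add: m_assoc)
      also have "\<dots> = h1 \<otimes> h2" using cc b bb c by (simp add: m_assoc)
      finally have "h1 \<otimes> h2 = c \<otimes> (b \<otimes> h2 \<otimes> b) \<otimes> b" by simp
      also have "\<dots> = (c \<otimes> inv h2) \<otimes> b" using conj[OF h2] by simp
      finally show ?case using subgroup.m_closed[OF Asub c(1) subgroup.m_inv_closed[OF Asub h2]] by blast
    next
      fix c d assume c: "c \<in> A" "h1 = c \<otimes> b" and d: "d \<in> A" "h2 = d \<otimes> b"
      have cc: "c \<in> carrier G" "d \<in> carrier G" using c d Ac by auto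
      have "h1 \<otimes> h2 = c \<otimes> (b \<otimes> d \<otimes> b)" using c d cc b by (simp add: m_assoc)
      also have "\<dots> = c \<otimes> inv d" using conj[OF d(1)] by simp
      finally show ?case using subgroup.m_closed[OF Asub c(1) subgroup.m_inv_closed[OF Asub d(1)]] by simp
    qed
  qed
  have "\<forall>x\<in>carrier G. x \<in> A \<or> x [^] (2::nat) = \<one>"
  proof
    fix x assume x: "x \<in> carrier G"
    then have "x \<in> A \<or> (\<exists>c\<in>A. x = c \<otimes> b)" using struct gen by blast
    then show "x \<in> A \<or> x [^] (2::nat) = \<one>"
    proof
      assume "\<exists>c\<in>A. x = c \<otimes> b"
      then obtain c where c: "c \<in> A" "x = c \<otimes> b" by blast
      have cc: "c \<in> carrier G" using c Ac by auto
      have "x [^] (2::nat) = c \<otimes> (b \<otimes> c \<otimes> b)" using c cc b sq_eq[OF x] by (simp add: m_assoc)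
      also have "\<dots> = \<one>" using conj[OF c(1)] cc by simp
      finally show ?thesis by simp
    qed simp
  qed
  then show ?thesis using a am unfolding A_def by blast
qed

lemma family_CC:
  assumes fin: "finite (carrier G)" and fam: "in_threshold_family G"
  shows "CC G"
proof -
  have dihed: "CC G" if d: "is_dihedral G m" and comp: "\<forall>d1 d2. d1 dvd m \<longrightarrow> d2 dvd m \<longrightarrow> d1 > 2 \<longrightarrow> d2 > 2 \<longrightarrow> d1 dvd d2 \<or> d2 dvd d1" for m
  proof -
    obtain a where a: "a \<in> carrier G" "a [^] m = \<one>" and st: "\<forall>x\<in>carrier G. x \<in> generate G {a} \<or> x [^] (2::nat) = \<one>"
      using dihedral_struct[OF d] by blast
    have "ord a dvd m" using a pow_eq_id by blast
    then show ?thesis using FamCC[OF fin a(1) _ _ comp] st by blast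
  qed
  have cyc: "CC G" if c: "cyclic_group G" and comp: "\<forall>d1 d2. d1 dvd order G \<longrightarrow> d2 dvd order G \<longrightarrow> d1 > 2 \<longrightarrow> d2 > 2 \<longrightarrow> d1 dvd d2 \<or> d2 dvd d1"
  proof -
    obtain g where g: "g \<in> carrier G" "carrier G = generate G {g}" "ord g = order G"
      using cyclic_gen[OF fin c] by blast
    show ?thesis using FamCC[OF fin g(1) _ _ comp] g by simp
  qed
  from fam show ?thesis unfolding in_threshold_family_def
  proof (elim disjE exE conjE)
    fix q n :: nat assume "cyclic_group G" "Factorial_Ring.prime q" "order G = q ^ n"
    then show ?thesis using cyc primepow_comp by metis
  next
    assume "elementary_abelian_2_group G"
    then show ?thesis unfolding elementary_abelian_2_group_def CC_def by blast
  next
    fix k :: nat assume "is_dihedral G (2 ^ k)"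
    then show ?thesis using dihed primepow_comp[of 2] by (meson two_is_prime_nat)
  next
    fix p :: nat assume "Factorial_Ring.prime p" "cyclic_group G" "order G = 2 * p"
    then show ?thesis using cyc twop_comp by metis
  next
    fix p n :: nat assume "Factorial_Ring.prime p" "is_dihedral G (p ^ n)"
    then show ?thesis using dihed primepow_comp by metis
  next
    fix p :: nat assume "Factorial_Ring.prime p" "is_dihedral G (2 * p)"
    then show ?thesis using dihed twop_comp by metis
  qed
qed

end


lemma NT2:
  fixes m P :: nat
  assumes P: "Factorial_Ring.prime P" and Podd: "odd P" and m0: "m > 0" and two: "2 dvd m" and Pm: "P dvd m"
    and comp: "\<forall>d1 d2. d1 dvd m \<longrightarrow> d2 dvd m \<longrightarrow> d1 > 2 \<longrightarrow> d2 > 2 \<longrightarrow> d1 dvd d2 \<or> d2 dvd d1"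
  shows "m = 2 * P"
proof -
  have P2: "P \<ge> 2" using prime_ge_2_nat[OF P] .
  have "P \<noteq> 2" using Podd by auto
  then have P3: "P \<ge> 3" using P2 by simp
  have "\<not> 2 dvd P" using Podd by simp
  then have cop: "coprime 2 P" using two_is_prime_nat by (intro prime_imp_coprime)
  have "2 * P dvd m" using divides_mult[OF two Pm cop] .
  then obtain e where e: "m = 2 * P * e" by blast
  have e0: "e \<noteq> 0" using e m0 by auto
  show ?thesis
  proof (cases "e = 1")
    case True then show ?thesis using e by simp
  next
    case False
    then have e2: "e \<ge> 2" using e0 by auto
    have d1: "P dvd m" using Pm .
    have d2: "2 * e dvd m" using e by (simp add: mult.commute mult.left_commute)
    have "P > 2" "2 * e > 2" using P3 e2 by auto
    then have "P dvd 2 * e \<or> 2 * e dvd P" using comp[rule_format, OF d1 d2] by blast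
    then show ?thesis
    proof
      assume "2 * e dvd P"
      then have "2 dvd P" using dvd_mult_left by blast
      then show ?thesis using Podd by simp
    next
      assume "P dvd 2 * e"
      moreover have "coprime P 2" using cop by (simp add: coprime_commute)
      ultimately have "P dvd e" using coprime_dvd_mult_right_iff by blast
      then obtain f where f: "e = P * f" by blast
      have dPP: "P * P dvd m" using e f by (simp add: mult.commute mult.left_commute)
      have d2P: "2 * P dvd m" using e by simp
      have "P * P \<ge> 3 * 3" using P3 by (intro mult_le_mono) auto
      then have "P * P > 2" by simp
      moreover have "2 * P > 2" using P3 by simp
      ultimately have "P * P dvd 2 * P \<or> 2 * P dvd P * P" using comp[rule_format, OF dPP d2P] by blast
      then show ?thesis
      proof
        assume "P * P dvd 2 * P"
        then have "P * P dvd P * 2" by (simp add: mult.commute)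
        then have "P dvd 2" using P3 nat_mult_dvd_cancel1[of P P 2] by simp
        then have "P \<le> 2" using dvd_imp_le[of P 2] by simp
        then show ?thesis using P3 by simp
      next
        assume "2 * P dvd P * P"
        then have "P * 2 dvd P * P" by (simp add: mult.commute)
        then have "2 dvd P" using P3 nat_mult_dvd_cancel1[of P 2 P] by simp
        then show ?thesis using Podd by simp
      qed
    qed
  qed
qed

lemma NT:
  fixes m :: nat
  assumes m2: "m > 2"
    and comp: "\<forall>d1 d2. d1 dvd m \<longrightarrow> d2 dvd m \<longrightarrow> d1 > 2 \<longrightarrow> d2 > 2 \<longrightarrow> d1 dvd d2 \<or> d2 dvd d1"
  shows "(\<exists>q n. Factorial_Ring.prime q \<and> m = q ^ n) \<or> (\<exists>p. Factorial_Ring.prime p \<and> odd p \<and> m = 2 * p)"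
proof (cases "\<exists>q n. Factorial_Ring.prime q \<and> m = q ^ n")
  case True then show ?thesis by blast
next
  case False
  obtain p where p: "Factorial_Ring.prime p" "p dvd m" using prime_factor_nat[of m] m2 by auto
  have "m \<noteq> 0" "\<not> is_unit p" using m2 p by auto
  then obtain r where r0: "m = p ^ multiplicity p m * r" "\<not> p dvd r" using multiplicity_decompose' by blast
  define k where "k = multiplicity p m"
  have r: "m = p ^ k * r" "\<not> p dvd r" using r0 unfolding k_def by auto
  have "r \<noteq> 1"
  proof
    assume "r = 1"
    then have "m = p ^ k" using r(1) by simp
    then show False using False p(1) by blast
  qed
  then obtain q where q: "Factorial_Ring.prime q" "q dvd r" using prime_factor_nat by blast
  have "q dvd p ^ k * r" using q(2) by (rule dvd_mult)
  then have qm: "q dvd m" using r(1) by simp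
  have pq: "p \<noteq> q" using q r by auto
  have "\<exists>P. Factorial_Ring.prime P \<and> odd P \<and> P dvd m \<and> 2 dvd m"
  proof (cases "p = 2")
    case True
    have "odd q"
    proof
      assume "even q"
      then have "2 = q" using primes_dvd_imp_eq[OF two_is_prime_nat q(1)] by simp
      then show False using pq True by simp
    qed
    then show ?thesis using q qm p True by blast
  next
    case pn2: False
    show ?thesis
    proof (cases "q = 2")
      case True
      have "odd p"
      proof
        assume "even p"
        then have "2 = p" using primes_dvd_imp_eq[OF two_is_prime_nat p(1)] by simp
        then show False using pn2 by simp
      qed
      then show ?thesis using p qm True by blast
    next
      case False
      have "p > 2" using pn2 prime_ge_2_nat[OF p(1)] by simp
      moreover have "q > 2" using False prime_ge_2_nat[OF q(1)] by simp
      ultimately have "p dvd q \<or> q dvd p" using comp p(2) qm by blast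
      then have "p = q" using primes_dvd_imp_eq p(1) q(1) by blast
      then show ?thesis using pq by blast
    qed
  qed
  then obtain P where "Factorial_Ring.prime P" "odd P" "P dvd m" "2 dvd m" by blast
  then have "m = 2 * P" using NT2[OF _ _ _ _ _ comp] m2 by simp
  then show ?thesis using \<open>Factorial_Ring.prime P\<close> \<open>odd P\<close> by blast
qed



context group begin

lemma CC_family:
  assumes fin: "finite (carrier G)" and cc: "CC G"
  shows "in_threshold_family G"
proof (cases "\<forall>x\<in>carrier G. x [^] (2::nat) = \<one>")
  case True
  have "comm_group G"
  proof (rule group_comm_groupI)
    fix x y assume x: "x \<in> carrier G" and y: "y \<in> carrier G"
    have xx: "x \<otimes> x = \<one>" using True x sq_eq by auto
    have yy: "y \<otimes> y = \<one>" using True y sq_eq by auto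
    have xy: "(x \<otimes> y) \<otimes> (x \<otimes> y) = \<one>" using True x y sq_eq[of "x \<otimes> y"] by auto
    have ix: "inv x = x" using inv_equality[OF xx x x] .
    have iy: "inv y = y" using inv_equality[OF yy y y] .
    have "inv (x \<otimes> y) = x \<otimes> y" using inv_equality[OF xy] x y by simp
    moreover have "inv (x \<otimes> y) = y \<otimes> x" using inv_mult_group[OF x y] ix iy by simp
    ultimately show "x \<otimes> y = y \<otimes> x" by simp
  qed
  then have "elementary_abelian_2_group G" using True unfolding elementary_abelian_2_group_def by simp
  then show ?thesis unfolding in_threshold_family_def by (rule disjI2[OF disjI1])
next
  case False
  define S where "S = {x\<in>carrier G. x [^] (2::nat) \<noteq> \<one>}"
  define f where "f = (\<lambda>x. card (generate G {x}))"
  have Sfin: "finite S" using fin unfolding S_def by auto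
  have Sne: "S \<noteq> {}" using False unfolding S_def by auto
  have "Max (f ` S) \<in> f ` S" by (rule Max_in) (use Sfin Sne in auto)
  then obtain z where zS: "z \<in> S" and zmax: "f z = Max (f ` S)" by auto
  have maxz: "f y \<le> f z" if "y \<in> S" for y
  proof -
    have "f y \<le> Max (f ` S)" using Sfin that by simp
    then show ?thesis using zmax by simp
  qed
  have z: "z \<in> carrier G" and z2: "z [^] (2::nat) \<noteq> \<one>" using zS unfolding S_def by auto
  define A where "A = generate G {z}"
  have Asub: "subgroup A G" unfolding A_def using z by (auto intro: generate_is_subgroup)
  have Ac: "A \<subseteq> carrier G" using subgroup.subset[OF Asub] .
  have zA: "z \<in> A" unfolding A_def by (rule generate.incl) simp
  have allA: "x \<in> A" if x: "x \<in> carrier G" and x2: "x [^] (2::nat) \<noteq> \<one>" for x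
  proof -
    have "pw G z x \<or> pw G x z" using cc z x z2 x2 unfolding CC_def by blast
    then show ?thesis
    proof
      assume "pw G z x" then show ?thesis using pw_gen[OF z] unfolding A_def by blast
    next
      assume "pw G x z"
      then have "z \<in> generate G {x}" using pw_gen[OF x] by blast
      then have sub: "A \<subseteq> generate G {x}" unfolding A_def
        using generate_subgroup_incl[of "{z}" "generate G {x}"] generate_is_subgroup[of "{x}"] x by auto
      have "generate G {x} \<subseteq> carrier G" using generate_incl[of "{x}"] x by simp
      then have finx: "finite (generate G {x})" using fin by (rule finite_subset)
      have "x \<in> S" using x x2 unfolding S_def by simp
      then have "f x \<le> f z" by (rule maxz)
      then have "card (generate G {x}) \<le> card A" unfolding f_def A_def by simp
      then have "card A = card (generate G {x})" using card_mono[OF finx sub] by simp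
      then have "A = generate G {x}" by (rule card_subset_eq[OF finx sub])
      moreover have "x \<in> generate G {x}" by (rule generate.incl) simp
      ultimately show ?thesis by simp
    qed
  qed
  define m where "m = ord z"
  have mA: "m = card A" unfolding m_def A_def using generate_pow_card[OF z] .
  have m2: "m > 2" unfolding m_def using ord_gt2[OF fin z] z2 by simp
  have ordk: "ord (z [^] k) = d" if "m = d * k" "d > 0" for d k
  proof -
    have k0: "k \<noteq> 0"
    proof
      assume "k = 0"
      then have "m = 0" using that by simp
      then show False using m2 by simp
    qed
    have "k dvd ord z" using that unfolding m_def by simp
    then have "ord (z [^] k) = ord z div k" using ord_pow[OF z _ k0] by simp
    then show ?thesis using that k0 unfolding m_def by simp
  qed
  have comp: "\<forall>d1 d2. d1 dvd m \<longrightarrow> d2 dvd m \<longrightarrow> d1 > 2 \<longrightarrow> d2 > 2 \<longrightarrow> d1 dvd d2 \<or> d2 dvd d1"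
  proof (intro allI impI)
    fix d1 d2 :: nat assume d1: "d1 dvd m" and d2: "d2 dvd m" and g1: "d1 > 2" and g2: "d2 > 2"
    obtain k1 where k1: "m = d1 * k1" using d1 by blast
    obtain k2 where k2: "m = d2 * k2" using d2 by blast
    define u where "u = z [^] k1"
    define v where "v = z [^] k2"
    have uc: "u \<in> carrier G" and vc: "v \<in> carrier G" unfolding u_def v_def using z by auto
    have ou: "ord u = d1" unfolding u_def using ordk[OF k1] g1 by simp
    have ov: "ord v = d2" unfolding v_def using ordk[OF k2] g2 by simp
    have "u [^] (2::nat) \<noteq> \<one>" "v [^] (2::nat) \<noteq> \<one>" using ord_gt2[OF fin] uc vc ou ov g1 g2 by auto
    then have "pw G u v \<or> pw G v u" using cc uc vc unfolding CC_def by blast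
    then show "d1 dvd d2 \<or> d2 dvd d1" using pw_ord_dvd[OF uc, of v] pw_ord_dvd[OF vc, of u] ou ov by blast
  qed
  have shape: "(\<exists>q n. Factorial_Ring.prime q \<and> m = q ^ n) \<or> (\<exists>p. Factorial_Ring.prime p \<and> odd p \<and> m = 2 * p)"
    using NT[OF m2 comp] .
  show ?thesis
  proof (cases "A = carrier G")
    case True
    have "generate G {z} = range (\<lambda>n::int. z [^] n)" unfolding generate_pow[OF z] by auto
    then have "carrier G = range (\<lambda>n::int. z [^] n)" using True unfolding A_def by simp
    then have cyc: "cyclic_group G" using cyclic_group z by blast
    have ord: "order G = m" using True mA unfolding order_def by simp
    from shape show ?thesis
    proof
      assume "\<exists>q n. Factorial_Ring.prime q \<and> m = q ^ n"
      then have "cyclic_group G \<and> (\<exists>q n. Factorial_Ring.prime (q::nat) \<and> order G = q ^ n)" using cyc ord by simp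
      then show ?thesis unfolding in_threshold_family_def by (rule disjI1)
    next
      assume "\<exists>p. Factorial_Ring.prime p \<and> odd p \<and> m = 2 * p"
      then obtain p where p: "Factorial_Ring.prime p" "odd p" "m = 2 * p" by blast
      show ?thesis unfolding in_threshold_family_def
        apply (rule disjI2, rule disjI2, rule disjI2, rule exI[of _ p])
        using p cyc ord by simp
    qed
  next
    case False
    then obtain s where s: "s \<in> carrier G" "s \<notin> A" using Ac by blast
    have out2: "t \<otimes> t = \<one>" if "t \<in> carrier G" "t \<notin> A" for t
      using allA[of t] that sq_eq[of t] by auto
    have tc_out: "t \<otimes> c \<notin> A" if "t \<in> carrier G" "t \<notin> A" "c \<in> A" for t c
    proof
      assume tc: "t \<otimes> c \<in> A"
      have cc: "c \<in> carrier G" using that Ac by auto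
      have eq: "(t \<otimes> c) \<otimes> inv c = t" using that cc by (simp add: m_assoc)
      have "(t \<otimes> c) \<otimes> inv c \<in> A" using subgroup.m_closed[OF Asub tc subgroup.m_inv_closed[OF Asub that(3)]] .
      then show False using that(2) eq by simp
    qed
    have ct_out: "c \<otimes> t \<notin> A" if "t \<in> carrier G" "t \<notin> A" "c \<in> A" for t c
    proof
      assume tc: "c \<otimes> t \<in> A"
      have cc: "c \<in> carrier G" using that Ac by auto
      have eq: "inv c \<otimes> (c \<otimes> t) = t" using that cc by (simp add: m_assoc[symmetric])
      have "inv c \<otimes> (c \<otimes> t) \<in> A" using subgroup.m_closed[OF Asub subgroup.m_inv_closed[OF Asub that(3)] tc] .
      then show False using that(2) eq by simp
    qed
    have conj: "t \<otimes> c \<otimes> t = inv c" if "t \<in> carrier G" "t \<notin> A" "c \<in> A" for t c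
    proof -
      have cc: "c \<in> carrier G" using that Ac by auto
      have "(t \<otimes> c) \<otimes> (t \<otimes> c) = \<one>" using out2[of "t \<otimes> c"] tc_out[OF that] that cc by simp
      then have "(t \<otimes> c \<otimes> t) \<otimes> c = \<one>" using that cc by (simp add: m_assoc)
      then show ?thesis using inv_equality[of "t \<otimes> c \<otimes> t" c] that cc by simp
    qed
    have sg: "s \<otimes> g \<in> A" if g: "g \<in> carrier G" "g \<notin> A" for g
    proof (rule ccontr)
      assume w: "s \<otimes> g \<notin> A"
      have wc: "s \<otimes> g \<in> carrier G" using s g by simp
      have ss: "s \<otimes> s = \<one>" using out2 s by blast
      have gg: "g \<otimes> g = \<one>" using out2 g by blast
      have ww: "(s \<otimes> g) \<otimes> (s \<otimes> g) = \<one>" using out2 wc w by blast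
      have "g \<otimes> s = (s \<otimes> s) \<otimes> (g \<otimes> s) \<otimes> (g \<otimes> g)" using ss gg s g by simp
      also have "\<dots> = s \<otimes> ((s \<otimes> g) \<otimes> (s \<otimes> g)) \<otimes> g" using s g by (simp add: m_assoc)
      also have "\<dots> = s \<otimes> g" using ww s g by simp
      finally have com: "g \<otimes> s = s \<otimes> g" .
      have izA: "inv z \<in> A" using subgroup.m_inv_closed[OF Asub zA] .
      have "inv z = (s \<otimes> g) \<otimes> z \<otimes> (s \<otimes> g)" using conj[OF wc w zA] by (rule sym)
      also have "\<dots> = (s \<otimes> g) \<otimes> z \<otimes> (g \<otimes> s)" by (simp only: com)
      also have "\<dots> = s \<otimes> (g \<otimes> z \<otimes> g) \<otimes> s" using s g z by (simp add: m_assoc)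
      also have "\<dots> = s \<otimes> inv z \<otimes> s" by (simp only: conj[OF g zA])
      also have "\<dots> = inv (inv z)" using conj[OF s izA] .
      also have "\<dots> = z" using z by simp
      finally have "inv z = z" .
      then have "z \<otimes> z = z \<otimes> inv z" by simp
      also have "\<dots> = \<one>" by (rule r_inv[OF z])
      finally have "z \<otimes> z = \<one>" .
      then show False using z2 sq_eq[OF z] by simp
    qed
    have gen: "generate G {z, s} = carrier G"
    proof
      show "generate G {z, s} \<subseteq> carrier G" using generate_incl[of "{z, s}"] z s by simp
    next
      have AS: "A \<subseteq> generate G {z, s}" unfolding A_def by (rule mono_generate) auto
      have sS: "s \<in> generate G {z, s}" by (rule generate.incl) simp
      show "carrier G \<subseteq> generate G {z, s}"
      proof
        fix g assume g: "g \<in> carrier G"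
        show "g \<in> generate G {z, s}"
        proof (cases "g \<in> A")
          case True then show ?thesis using AS by blast
        next
          case False
          have "s \<otimes> (s \<otimes> g) = g" using out2[OF s] s g by (simp add: m_assoc[symmetric])
          moreover have "s \<otimes> (s \<otimes> g) \<in> generate G {z, s}"
            using generate.eng[OF sS] AS sg[OF g False] by blast
          ultimately show ?thesis by simp
        qed
      qed
    qed
    have zm: "z [^] m = \<one>" unfolding m_def using z by simp
    have s2: "s [^] (2::nat) = \<one>" using out2[OF s] sq_eq s by simp
    have zs2: "(z \<otimes> s) [^] (2::nat) = \<one>"
      using out2[of "z \<otimes> s"] ct_out[OF s zA] sq_eq[of "z \<otimes> s"] z s by simp
    have ordG: "order G = 2 * m"
    proof -
      have inj: "inj_on (\<lambda>c. s \<otimes> c) A"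
      proof (rule inj_onI)
        fix x y assume "x \<in> A" "y \<in> A" "s \<otimes> x = s \<otimes> y"
        then show "x = y" using l_cancel[of s x y] s Ac by auto
      qed
      have img: "(\<lambda>c. s \<otimes> c) ` A = carrier G - A"
      proof
        show "(\<lambda>c. s \<otimes> c) ` A \<subseteq> carrier G - A" using tc_out[OF s] s Ac by auto
      next
        show "carrier G - A \<subseteq> (\<lambda>c. s \<otimes> c) ` A"
        proof
          fix g assume g: "g \<in> carrier G - A"
          have eq: "s \<otimes> (s \<otimes> g) = g" using out2[OF s] s g by (simp add: m_assoc[symmetric])
          have mem: "s \<otimes> g \<in> A" using sg[of g] g by blast
          show "g \<in> (\<lambda>c. s \<otimes> c) ` A" using image_eqI[of g "(\<otimes>) s" "s \<otimes> g", OF eq[symmetric] mem] .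
        qed
      qed
      have "card (carrier G - A) = card A" using card_image[OF inj] img by simp
      moreover have "card (carrier G - A) = card (carrier G) - card A" using card_Diff_subset[OF finite_subset[OF Ac fin] Ac] .
      moreover have "card A \<le> card (carrier G)" using card_mono[OF fin Ac] .
      ultimately show ?thesis using mA unfolding order_def by simp
    qed
    have dih: "is_dihedral G m" unfolding is_dihedral_def using z s(1) gen zm s2 zs2 ordG by blast
    from shape show ?thesis
    proof
      assume "\<exists>q n. Factorial_Ring.prime q \<and> m = q ^ n"
      then obtain q n where q: "Factorial_Ring.prime q" "m = q ^ n" by blast
      show ?thesis
      proof (cases "q = 2")
        case True
        show ?thesis unfolding in_threshold_family_def
          apply (rule disjI2, rule disjI2, rule disjI1, rule exI[of _ n])
          using dih q True by simp
      next
        case False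
        have "odd q"
        proof
          assume "even q"
          then have "2 = q" using primes_dvd_imp_eq[OF two_is_prime_nat q(1)] by simp
          then show False using False by simp
        qed
        moreover have "n \<ge> 1" using q m2 by (cases n) auto
        ultimately show ?thesis unfolding in_threshold_family_def
          apply (intro disjI2 exI[of _ q])
          using dih q by auto
      qed
    next
      assume "\<exists>p. Factorial_Ring.prime p \<and> odd p \<and> m = 2 * p"
      then obtain p where p: "Factorial_Ring.prime p" "odd p" "m = 2 * p" by blast
      show ?thesis unfolding in_threshold_family_def
        apply (rule disjI2, rule disjI2, rule disjI2, rule exI[of _ p])
        using p dih by simp
    qed
  qed
qed

end

theorem mainTheorem13:
  fixes G (structure)
  assumes "group G" and "finite (carrier G)"
  shows "(threshold_graph (carrier G) (power_adj G) \<longleftrightarrow> split_graph (carrier G) (power_adj G))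
       \<and> (split_graph (carrier G) (power_adj G) \<longleftrightarrow> \<not> has_induced_2K2 (carrier G) (power_adj G))
       \<and> (\<not> has_induced_2K2 (carrier G) (power_adj G) \<longleftrightarrow> intersection_condition G)
       \<and> (intersection_condition G \<longleftrightarrow> in_threshold_family G)"
proof -
  interpret group G by (rule assms(1))
  have fin: "finite (carrier G)" by (rule assms(2))
  have b: "\<not> has_induced_2K2 (carrier G) (power_adj G) \<longleftrightarrow> CC G"
    using notCC_2K2 split_no_2K2[OF CC_split] by blast
  have c: "split_graph (carrier G) (power_adj G) \<longleftrightarrow> CC G"
    using CC_split split_no_2K2[of "carrier G" "power_adj G"] b by blast
  have d: "threshold_graph (carrier G) (power_adj G) \<longleftrightarrow> CC G"
    using CC_noP4 split_no_C4[OF CC_split] b unfolding threshold_graph_def by blast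
  have e: "intersection_condition G \<longleftrightarrow> CC G" using CC_IC[OF fin] by simp
  have f: "in_threshold_family G \<longleftrightarrow> CC G" using family_CC[OF fin] CC_family[OF fin] by blast
  show ?thesis using b c d e f by simp
qed

end
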